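(* For real $f\ge 0$ define $$I_2(f)=(1+f)\iint_{\pi/2>\alpha>\beta>0}\frac{\mathrm{d}\alpha\,\mathrm{d}\beta}{\sqrt{\bigl((1+f)^2-4f\cos^2\alpha\bigr)\bigl((1+f)^2-4f\sin^2\beta\bigr)}}.$$ Let $\theta=f\,\frac{\mathrm{d}}{\mathrm{d}f}$ and put $g(f)=I_2(f)/(1+f)$. Define $$R(f)=\frac1f\Bigl(\theta^3 g-2f\,(\theta^3+\theta)\bigl(f\,g\bigr)+f^2\,\theta^3\bigl(f^2 g\bigr)\Bigr),$$ that is, $R=L(f,\theta)I_2$ for the operator $L(f,\theta)=\frac1f\bigl(\theta^3-2f(\theta^3+\theta)f+f^2\theta^3f^2\bigr)\frac1{1+f}$, where powers of $f$ act as multiplication operators and the operators are composed from right to left. Then for $0<f<1$, $$R(f)=2\left(\frac{2f}{1+f^2}\right)^2-1.$$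
   Context: The paper does not specify an explicit domain for this identity; it is stated here on $0<f<1$, where $I_2$ is real-analytic. *)

theory Defs
  imports "HOL-Analysis.Analysis"
begin

definition I2 :: "real \<Rightarrow> real" where
  "I2 f = (1 + f) * integral {(a, b). 0 < b \<and> b < a \<and> a < pi / 2}
     (\<lambda>(a, b). 1 / sqrt (((1 + f)\<^sup>2 - 4 * f * (cos a)\<^sup>2) * ((1 + f)\<^sup>2 - 4 * f * (sin b)\<^sup>2)))"

definition theta :: "(real \<Rightarrow> real) \<Rightarrow> real \<Rightarrow> real" where
  "theta h = (\<lambda>x. x * deriv h x)"

definition gI :: "real \<Rightarrow> real" where
  "gI f = I2 f / (1 + f)"

definition R :: "real \<Rightarrow> real" where
  "R f = (1 / f) * ( theta (theta (theta gI)) f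
        - 2 * f * ( theta (theta (theta (\<lambda>x. x * gI x))) f + theta (\<lambda>x. x * gI x) f )
        + f\<^sup>2 * theta (theta (theta (\<lambda>x. x\<^sup>2 * gI x))) f )"

end

theory Submission
  imports Defs
begin


definition Dc :: "real \<Rightarrow> real \<Rightarrow> real" where "Dc c x = 1 + x^2 - 2*x*c"
definition ip :: "nat \<Rightarrow> real \<Rightarrow> real \<Rightarrow> real" where "ip n c x = 1 / sqrt (Dc c x) ^ n"

lemma Dc_pos: "0 < x \<Longrightarrow> x < 1 \<Longrightarrow> c \<le> 1 \<Longrightarrow> 0 < Dc c x"
proof -
  assume a: "0 < x" "x < 1" "c \<le> 1"
  have "Dc c x = (1-x)^2 + 2*x*(1-c)" by (simp add: Dc_def power2_eq_square algebra_simps)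
  moreover have "(1-x)^2 > 0" using a by simp
  moreover have "2*x*(1-c) \<ge> 0" using a by simp
  ultimately show ?thesis by linarith
qed

lemma Dc_pos_cos: "0 < x \<Longrightarrow> x < 1 \<Longrightarrow> e^2 = 1 \<Longrightarrow> 0 < Dc (e * cos y) x"
proof (rule Dc_pos)
  assume "e^2 = 1"
  then have "\<bar>e\<bar> = 1" by (metis abs_power2 power2_eq_1_iff abs_1 abs_minus_cancel abs_of_nonneg zero_le_one)
  then have "\<bar>e * cos y\<bar> \<le> 1" by (simp add: abs_mult)
  then show "e * cos y \<le> 1" by simp
qed

lemma dpow:
  assumes "0 < Dc c x"
  shows "((\<lambda>x. ip n c x) has_real_derivative (-(real n) * (x - c) * ip (n+2) c x)) (at x)"
proof -
  have s: "sqrt (Dc c x) > 0" using assms by simp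
  show ?thesis
    unfolding ip_def Dc_def using assms s
    apply (auto intro!: derivative_eq_intros simp: Dc_def)
    apply (cases n)
    apply (simp_all add: field_simps power2_eq_square inverse_eq_divide)
    done
qed

lemma dpow_t:
  assumes "0 < Dc (e * cos (2*t)) x"
  shows "((\<lambda>t. ip n (e * cos (2*t)) x) has_real_derivative (-2 * real n * x * e * sin (2*t) * ip (n+2) (e * cos (2*t)) x)) (at t)"
proof -
  have s: "sqrt (Dc (e * cos (2*t)) x) > 0" using assms by simp
  show ?thesis
    unfolding ip_def Dc_def using assms s
    apply (auto intro!: derivative_eq_intros simp: Dc_def)
    apply (cases n)
    apply (simp_all add: field_simps power2_eq_square inverse_eq_divide)
    done
qed

lemma ip_odd:
  assumes "0 < Dc c x"
  shows "ip 3 c x = ip 1 c x / Dc c x" "ip 5 c x = ip 1 c x / (Dc c x)^2" "ip 7 c x = ip 1 c x / (Dc c x)^3"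
proof -
  have s: "sqrt (Dc c x) ^ 2 = Dc c x" using assms by simp
  have p: "sqrt (Dc c x) > 0" using assms by simp
  have e3: "sqrt (Dc c x) ^ 3 = sqrt (Dc c x) * Dc c x"
    using s by (simp add: power2_eq_square power3_eq_cube)
  have e5: "sqrt (Dc c x) ^ 5 = sqrt (Dc c x) * (Dc c x)^2"
  proof -
    have "sqrt (Dc c x) ^ 5 = sqrt (Dc c x) ^ 3 * sqrt (Dc c x)^2" by (simp add: power_add[symmetric])
    then show ?thesis using e3 s by (simp add: power2_eq_square)
  qed
  have e7: "sqrt (Dc c x) ^ 7 = sqrt (Dc c x) * (Dc c x)^3"
  proof -
    have "sqrt (Dc c x) ^ 7 = sqrt (Dc c x) ^ 5 * sqrt (Dc c x)^2" by (simp add: power_add[symmetric])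
    then show ?thesis using e5 s by (simp add: power2_eq_square power3_eq_cube)
  qed
  show "ip 3 c x = ip 1 c x / Dc c x" unfolding ip_def using p e3 by (simp add: field_simps)
  show "ip 5 c x = ip 1 c x / (Dc c x)^2" unfolding ip_def using p e5 by (simp add: field_simps)
  show "ip 7 c x = ip 1 c x / (Dc c x)^3" unfolding ip_def using p e7 by (simp add: field_simps)
qed

lemma Dc_c: "x \<noteq> 0 \<Longrightarrow> c = (1 + x^2 - Dc c x) / (2*x)"
  by (simp add: Dc_def field_simps)


lemma dpow_w:
  "0 < Dc c x \<Longrightarrow> ((\<lambda>x. ip n c x) has_real_derivative (-(real n) * (x - c) * ip (n+2) c x)) (at x within S)"
  using dpow has_field_derivative_at_within by blast

lemma dpow_tw:
  "0 < Dc (e * cos (2*t)) x \<Longrightarrow> ((\<lambda>t. ip n (e * cos (2*t)) x) has_real_derivative (-2 * real n * x * e * sin (2*t) * ip (n+2) (e * cos (2*t)) x)) (at t within S)"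
  using dpow_t has_field_derivative_at_within by blast

lemma dip [derivative_intros]:
  "0 < Dc c x \<Longrightarrow> ((\<lambda>x. ip 1 c x) has_real_derivative (- (x - c) * ip 3 c x)) (at x within S)"
  "0 < Dc c x \<Longrightarrow> ((\<lambda>x. ip 3 c x) has_real_derivative (- 3 * (x - c) * ip 5 c x)) (at x within S)"
  "0 < Dc c x \<Longrightarrow> ((\<lambda>x. ip 5 c x) has_real_derivative (- 5 * (x - c) * ip 7 c x)) (at x within S)"
  using dpow_w[of c x 1 S] dpow_w[of c x 3 S] dpow_w[of c x 5 S] by (simp_all add: numeral_eq_Suc)

lemma dipt [derivative_intros]:
  "0 < Dc (e * cos (2*t)) x \<Longrightarrow> ((\<lambda>t. ip 1 (e * cos (2*t)) x) has_real_derivative (-2 * x * e * sin (2*t) * ip 3 (e * cos (2*t)) x)) (at t within S)"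
  "0 < Dc (e * cos (2*t)) x \<Longrightarrow> ((\<lambda>t. ip 3 (e * cos (2*t)) x) has_real_derivative (-6 * x * e * sin (2*t) * ip 5 (e * cos (2*t)) x)) (at t within S)"
  "0 < Dc (e * cos (2*t)) x \<Longrightarrow> ((\<lambda>t. ip 5 (e * cos (2*t)) x) has_real_derivative (-10 * x * e * sin (2*t) * ip 7 (e * cos (2*t)) x)) (at t within S)"
  using dpow_tw[of e t x 1 S] dpow_tw[of e t x 3 S] dpow_tw[of e t x 5 S] by (simp_all add: numeral_eq_Suc)

lemma dipt1 [derivative_intros]:
  "0 < Dc (cos (2*t)) x \<Longrightarrow> ((\<lambda>t. ip 1 (cos (2*t)) x) has_real_derivative (-2 * x * sin (2*t) * ip 3 (cos (2*t)) x)) (at t within S)"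
  "0 < Dc (cos (2*t)) x \<Longrightarrow> ((\<lambda>t. ip 3 (cos (2*t)) x) has_real_derivative (-6 * x * sin (2*t) * ip 5 (cos (2*t)) x)) (at t within S)"
  "0 < Dc (- cos (2*t)) x \<Longrightarrow> ((\<lambda>t. ip 1 (- cos (2*t)) x) has_real_derivative (2 * x * sin (2*t) * ip 3 (- cos (2*t)) x)) (at t within S)"
  "0 < Dc (- cos (2*t)) x \<Longrightarrow> ((\<lambda>t. ip 3 (- cos (2*t)) x) has_real_derivative (6 * x * sin (2*t) * ip 5 (- cos (2*t)) x)) (at t within S)"
  using dipt[where e=1] dipt[where e="-1"] by simp_all

definition "H0 c x = ip 1 c x"
definition "H1 c x = -(x-c) * ip 3 c x"
definition "H2 c x = - ip 3 c x + 3*(x-c)^2 * ip 5 c x"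
definition "H3 c x = 9*(x-c)*ip 5 c x - 15*(x-c)^3 * ip 7 c x"
definition "Er c x = c * ip 3 c x / x - 3*(1-c^2) * ip 5 c x"
definition "Erx c x = -c*ip 3 c x/x^2 - 3*c*(x-c)*ip 5 c x/x + 15*(1-c^2)*(x-c)*ip 7 c x"

lemma dH0: "0 < Dc c x \<Longrightarrow> ((\<lambda>x. H0 c x) has_real_derivative H1 c x) (at x within S)"
  unfolding H0_def H1_def by (rule DERIV_cong[OF dip(1)]) simp_all
lemma dH1: "0 < Dc c x \<Longrightarrow> ((\<lambda>x. H1 c x) has_real_derivative H2 c x) (at x within S)"
  unfolding H1_def H2_def by (auto intro!: derivative_eq_intros simp: algebra_simps power2_eq_square)
lemma dH2: "0 < Dc c x \<Longrightarrow> ((\<lambda>x. H2 c x) has_real_derivative H3 c x) (at x within S)"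
  unfolding H2_def H3_def by (auto intro!: derivative_eq_intros simp: algebra_simps power2_eq_square power3_eq_cube)

definition "Psi e x t = e * sin (2*t) * ip 3 (e * cos (2*t)) x / (2*x)"

lemma sin_sq2: "sin (2*t) * sin (2*t) = 1 - cos (2*t) * cos (2*(t::real))"
  using sin_squared_eq[of "2*t"] by (simp add: power2_eq_square)
lemma sin_sq2': "sin (t*2) * sin (t*2) = 1 - cos (t*2) * cos (t*(2::real))"
  using sin_squared_eq[of "t*2"] by (simp add: power2_eq_square)

lemma dPsi [derivative_intros]:
  assumes "e^2 = 1" "0 < x" "x < 1"
  shows "((\<lambda>t. Psi e x t) has_real_derivative Er (e * cos (2*t)) x) (at t within S)"
proof -
  have he: "e * e = 1" using assms(1) by (simp add: power2_eq_square)
  have hx: "x \<noteq> 0" using assms by simp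
  note hs = sin_sq2'[of t]
  show ?thesis
    unfolding Psi_def Er_def using assms
    apply (auto intro!: derivative_eq_intros Dc_pos_cos)
    using hx apply (simp add: field_simps)
    using hs he by algebra
qed


definition "Psix e x t = e * sin (2*t) * (- ip 3 (e * cos (2*t)) x / (2*x^2) - 3*(x - e * cos (2*t)) * ip 5 (e * cos (2*t)) x / (2*x))"

lemma dPsix [derivative_intros]:
  assumes "e^2 = 1" "0 < x" "x < 1"
  shows "((\<lambda>t. Psix e x t) has_real_derivative Erx (e * cos (2*t)) x) (at t within S)"
proof -
  have he: "e * e = 1" using assms(1) by (simp add: power2_eq_square)
  have hx: "x \<noteq> 0" using assms by simp
  note hs = sin_sq2'[of t]
  show ?thesis
    unfolding Psix_def Erx_def using assms
    apply (auto intro!: derivative_eq_intros Dc_pos_cos)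
    using hx apply (simp add: field_simps)
    using hs he by algebra
qed

definition "AA x = (3*x^2-1)/(x*(1-x^2))"
definition "BB x = 1/(1-x^2)"
definition "AAd x = (3*x^4+1)/(x^2*(1-x^2)^2)"
definition "BBd x = 2*x/(1-x^2)^2"

lemma ode1_alg:
  fixes D y x m c :: real
  assumes "D \<noteq> 0" "x \<noteq> 0" "m \<noteq> 0" "m = 1 - x^2" "c = (1 + x^2 - D)/(2*x)"
  shows "- (y/D) + 3*(x-c)^2 * (y/D^2) = (3*x^2-1)/(x*m) * (-(x-c) * (y/D)) + 1/m * y + (c * (y/D) / x - 3*(1-c^2) * (y/D^2))"
  using assms(1-3) unfolding assms(5) apply (simp add: field_simps) unfolding assms(4) by algebra

lemma ode2_alg:
  fixes D y x m c :: real
  assumes "D \<noteq> 0" "x \<noteq> 0" "m \<noteq> 0" "m = 1 - x^2" "c = (1 + x^2 - D)/(2*x)"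
  shows "9*(x-c)*(y/D^2) - 15*(x-c)^3 * (y/D^3) = ((3*x^4+1)/(x^2*m^2) + 1/m) * (-(x-c) * (y/D)) + (3*x^2-1)/(x*m) * (- (y/D) + 3*(x-c)^2 * (y/D^2)) + 2*x/m^2 * y
     + (-c*(y/D)/x^2 - 3*c*(x-c)*(y/D^2)/x + 15*(1-c^2)*(x-c)*(y/D^3))"
  using assms(1-3) unfolding assms(5) apply (simp add: field_simps) unfolding assms(4) by algebra

lemma m_ne: "0 < x \<Longrightarrow> x < 1 \<Longrightarrow> 1 - x^2 \<noteq> (0::real)"
  by (metis abs_of_pos abs_square_eq_1 less_irrefl right_minus_eq)

lemma ode1:
  assumes "0 < x" "x < 1" "c \<le> 1"
  shows "H2 c x = AA x * H1 c x + BB x * H0 c x + Er c x"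
proof -
  have D: "0 < Dc c x" using Dc_pos assms by blast
  show ?thesis
    unfolding H0_def H1_def H2_def Er_def AA_def BB_def ip_odd[OF D]
    by (rule ode1_alg) (use D assms m_ne Dc_c in auto)
qed

lemma ode2:
  assumes "0 < x" "x < 1" "c \<le> 1"
  shows "H3 c x = (AAd x + BB x) * H1 c x + AA x * H2 c x + BBd x * H0 c x + Erx c x"
proof -
  have D: "0 < Dc c x" using Dc_pos assms by blast
  show ?thesis
    unfolding H0_def H1_def H2_def H3_def Erx_def AA_def BB_def AAd_def BBd_def ip_odd[OF D]
    by (rule ode2_alg) (use D assms m_ne Dc_c in auto)
qed

definition "cc0 x = -4*x+8*x^3"
definition "cc1 x = 1-16*x^2+19*x^4"
definition "cc2 x = 3*x-12*x^3+9*x^5"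
definition "cc3 x = x^2-2*x^4+x^6"
definition "CC0 x = 2*x*(1-x^2)*(1-3*x^2)"
definition "CC1 x = 3*x^2*(1-x^2)^2"
definition "CC2 x = x^2*(1-x^2)^2"

lemma symsq_alg:
  fixes x m y0 y1 y2 y3 z0 z1 z2 z3 r rx t tx :: real
  assumes "x \<noteq> 0" "m \<noteq> 0" "m = 1 - x^2"
  and "y2 = (3*x^2-1)/(x*m) * y1 + 1/m * y0 + r"
  and "y3 = ((3*x^4+1)/(x^2*m^2) + 1/m) * y1 + (3*x^2-1)/(x*m) * y2 + 2*x/m^2 * y0 + rx"
  and "z2 = (3*x^2-1)/(x*m) * z1 + 1/m * z0 + t"
  and "z3 = ((3*x^4+1)/(x^2*m^2) + 1/m) * z1 + (3*x^2-1)/(x*m) * z2 + 2*x/m^2 * z0 + tx"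
  shows "(-4*x+8*x^3) * (y0*z0) + (1-16*x^2+19*x^4) * (y1*z0+y0*z1) + (3*x-12*x^3+9*x^5) * (y2*z0+2*y1*z1+y0*z2)
     + (x^2-2*x^4+x^6) * (y3*z0+3*y2*z1+3*y1*z2+y0*z3)
   = 2*x*m*(1-3*x^2) * (r*z0 + y0*t) + 3*x^2*m^2 * (r*z1 + y1*t) + x^2*m^2 * (rx*z0 + y0*tx)"
  using assms(1,2) unfolding assms(5,7) unfolding assms(4,6) apply (simp add: field_simps) unfolding assms(3) by algebra

lemma symsq:
  fixes x y0 y1 y2 y3 z0 z1 z2 z3 r rx t tx :: real
  assumes "0 < x" "x < 1"
  and "y2 = AA x * y1 + BB x * y0 + r"
  and "y3 = (AAd x + BB x) * y1 + AA x * y2 + BBd x * y0 + rx"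
  and "z2 = AA x * z1 + BB x * z0 + t"
  and "z3 = (AAd x + BB x) * z1 + AA x * z2 + BBd x * z0 + tx"
  shows "cc0 x * (y0*z0) + cc1 x * (y1*z0+y0*z1) + cc2 x * (y2*z0+2*y1*z1+y0*z2)
     + cc3 x * (y3*z0+3*y2*z1+3*y1*z2+y0*z3)
   = CC0 x * (r*z0 + y0*t) + CC1 x * (r*z1 + y1*t) + CC2 x * (rx*z0 + y0*tx)"
  unfolding cc0_def cc1_def cc2_def cc3_def CC0_def CC1_def CC2_def
  by (rule symsq_alg[where m="1-x^2"]) (use assms m_ne in \<open>auto simp: AA_def BB_def AAd_def BBd_def\<close>)

lemma dpow_c:
  assumes "0 < Dc c x"
  shows "((\<lambda>c. ip n c x) has_real_derivative (real n * x * ip (n+2) c x)) (at c)"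
proof -
  have s: "sqrt (Dc c x) > 0" using assms by simp
  show ?thesis
    unfolding ip_def Dc_def using assms s
    apply (auto intro!: derivative_eq_intros simp: Dc_def)
    apply (cases n)
    apply (simp_all add: field_simps power2_eq_square inverse_eq_divide)
    done
qed

lemma dpow_cm:
  assumes "0 < Dc (-c) x"
  shows "((\<lambda>c. ip n (-c) x) has_real_derivative (- real n * x * ip (n+2) (-c) x)) (at c)"
proof -
  have s: "sqrt (Dc (-c) x) > 0" using assms by simp
  show ?thesis
    unfolding ip_def Dc_def using assms s
    apply (auto intro!: derivative_eq_intros simp: Dc_def)
    apply (cases n)
    apply (simp_all add: field_simps power2_eq_square inverse_eq_divide)
    done
qed

lemma dipc [derivative_intros]:
  "0 < Dc c x \<Longrightarrow> ((\<lambda>c. ip 1 c x) has_real_derivative (x * ip 3 c x)) (at c)"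
  "0 < Dc c x \<Longrightarrow> ((\<lambda>c. ip 3 c x) has_real_derivative (3 * x * ip 5 c x)) (at c)"
  "0 < Dc (-c) x \<Longrightarrow> ((\<lambda>c. ip 1 (-c) x) has_real_derivative (- x * ip 3 (-c) x)) (at c)"
  "0 < Dc (-c) x \<Longrightarrow> ((\<lambda>c. ip 3 (-c) x) has_real_derivative (- 3 * x * ip 5 (-c) x)) (at c)"
  using dpow_c[of c x 1] dpow_c[of c x 3] dpow_cm[of c x 1] dpow_cm[of c x 3] by (simp_all add: numeral_eq_Suc)

definition "SC x c = (1-x^2)^3/2 * c * ip 3 c x * ip 3 (- c) x
   - 4*x^2*(1-x^2)/(1+x^2)^2 * c * ip 1 c x * ip 1 (- c) x"

definition "EdC x c = -(CC0 x * (ip 3 c x/(2*x)) * H0 (-c) x + CC1 x * (ip 3 c x/(2*x)) * H1 (-c) x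
     + CC2 x * (-ip 3 c x/(2*x^2) - 3*(x-c)*ip 5 c x/(2*x)) * H0 (-c) x)
   + (CC0 x * H0 c x * (-ip 3 (-c) x/(2*x)) + CC1 x * H1 c x * (-ip 3 (-c) x/(2*x))
     + CC2 x * H0 c x * (-(-ip 3 (-c) x/(2*x^2) - 3*(x+c)*ip 5 (-c) x/(2*x))))"

lemma diag_alg:
  fixes x m p c y1 y2 D1 D2 :: real
  assumes "x \<noteq> 0" "p \<noteq> 0" "D1 \<noteq> 0" "D2 \<noteq> 0" "p = 1 + x^2" "D1 = 1 + x^2 - 2*x*c" "D2 = 1 + x^2 + 2*x*c"
  shows "(1-x^2)^3/2 * ((y1/D1) * (y2/D2) + c * (3*x*(y1/D1^2)) * (y2/D2) + c * (y1/D1) * (-3*x*(y2/D2^2)))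
     - 4*x^2*(1-x^2)/p^2 * (y1 * y2 + c * (x*(y1/D1)) * y2 + c * y1 * (-x * (y2/D2)))
   = - (-(2*x*(1-x^2)*(1-3*x^2) * ((y1/D1)/(2*x)) * y2 + 3*x^2*(1-x^2)^2 * ((y1/D1)/(2*x)) * (-(x - -c) * (y2/D2))
     + x^2*(1-x^2)^2 * (-(y1/D1)/(2*x^2) - 3*(x-c)*(y1/D1^2)/(2*x)) * y2)
   + (2*x*(1-x^2)*(1-3*x^2) * y1 * (-(y2/D2)/(2*x)) + 3*x^2*(1-x^2)^2 * (-(x-c) * (y1/D1)) * (-(y2/D2)/(2*x))
     + x^2*(1-x^2)^2 * y1 * (-(-(y2/D2)/(2*x^2) - 3*(x+c)*(y2/D2^2)/(2*x))))) / 2"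
  using assms(1-4) apply (simp add: field_simps) using assms(5-7) by algebra

lemma dSC:
  assumes "0 < x" "x < 1" "\<bar>c\<bar> \<le> 1"
  shows "((\<lambda>c. SC x c) has_real_derivative (- EdC x c / 2)) (at c)"
proof -
  have D1: "0 < Dc c x" using Dc_pos assms by auto
  have D2: "0 < Dc (-c) x" using Dc_pos assms by auto
  have p: "1 + x^2 \<noteq> 0" using zero_le_power2[of x] by linarith
  have "((\<lambda>c. SC x c) has_real_derivative
     ((1-x^2)^3/2 * (ip 3 c x * ip 3 (-c) x + c * (3*x*ip 5 c x) * ip 3 (-c) x + c * ip 3 c x * (-3*x*ip 5 (-c) x))
     - 4*x^2*(1-x^2)/(1+x^2)^2 * (ip 1 c x * ip 1 (-c) x + c*(x*ip 3 c x)*ip 1 (-c) x + c*ip 1 c x*(-x*ip 3 (-c) x)))) (at c)"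
    unfolding SC_def
    apply (rule derivative_eq_intros refl dipc D1 D2)+
    using p apply (simp add: field_simps)
    done
  also have "((1-x^2)^3/2 * (ip 3 c x * ip 3 (-c) x + c * (3*x*ip 5 c x) * ip 3 (-c) x + c * ip 3 c x * (-3*x*ip 5 (-c) x))
     - 4*x^2*(1-x^2)/(1+x^2)^2 * (ip 1 c x * ip 1 (-c) x + c*(x*ip 3 c x)*ip 1 (-c) x + c*ip 1 c x*(-x*ip 3 (-c) x)))
     = - EdC x c / 2"
    unfolding EdC_def H0_def H1_def CC0_def CC1_def CC2_def ip_odd[OF D1] ip_odd[OF D2]
    by (rule diag_alg[where p="1+x^2"]) (use D1 D2 assms in \<open>auto simp: Dc_def\<close>)
  finally show ?thesis .
qed

lemma dSfun:
  assumes "0 < x" "x < 1"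
  shows "((\<lambda>t. SC x (cos (2*t))) has_real_derivative (sin (2*t) * EdC x (cos (2*t)))) (at t within S)"
proof -
  have c1: "\<bar>cos (2*t)\<bar> \<le> 1" by simp
  have d1: "((\<lambda>u. cos (2*u)) has_real_derivative (- 2 * sin (2*t))) (at t)"
    by (auto intro!: derivative_eq_intros)
  note d = DERIV_chain2[OF dSC[OF assms c1] d1]
  show ?thesis
    by (rule has_field_derivative_at_within, rule DERIV_cong[OF d]) (auto intro!: derivative_eq_intros)
qed


lemma cont_ip [continuous_intros]:
  assumes "continuous_on S c" "continuous_on S x" "\<And>z. z \<in> S \<Longrightarrow> 0 < Dc (c z) (x z)"
  shows "continuous_on S (\<lambda>z. ip n (c z) (x z))"
proof -
  have nz: "\<forall>z\<in>S. sqrt (1 + (x z)^2 - 2 * x z * c z) ^ n \<noteq> 0"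
  proof
    fix z assume "z \<in> S"
    then have "0 < 1 + (x z)^2 - 2 * x z * c z" using assms(3) unfolding Dc_def by simp
    then show "sqrt (1 + (x z)^2 - 2 * x z * c z) ^ n \<noteq> 0" by simp
  qed
  have "continuous_on S (\<lambda>z. sqrt (1 + (x z)^2 - 2 * x z * c z) ^ n)"
    by (intro continuous_intros assms(1,2))
  then show ?thesis unfolding ip_def Dc_def
    by (rule continuous_on_divide[OF continuous_on_const _ nz])
qed

lemma cont_H [continuous_intros]:
  assumes "continuous_on S c" "continuous_on S x" "\<And>z. z \<in> S \<Longrightarrow> 0 < Dc (c z) (x z)"
  shows "continuous_on S (\<lambda>z. H0 (c z) (x z))" "continuous_on S (\<lambda>z. H1 (c z) (x z))"
        "continuous_on S (\<lambda>z. H2 (c z) (x z))" "continuous_on S (\<lambda>z. H3 (c z) (x z))"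
  unfolding H0_def H1_def H2_def H3_def by (intro continuous_intros assms; simp add: assms)+

definition "Bx = cbox (0::real,0::real) (pi/2, 1)"
definition "U = {0<..<(1::real)}"

definition "ca t = cos (2 * fst t)"
definition "cb t = - cos (2 * (fst t * snd t))"

definition "G0 x t = fst t * (H0 (ca t) x * H0 (cb t) x)"
definition "G1 x t = fst t * (H1 (ca t) x * H0 (cb t) x + H0 (ca t) x * H1 (cb t) x)"
definition "G2 x t = fst t * (H2 (ca t) x * H0 (cb t) x + 2 * H1 (ca t) x * H1 (cb t) x + H0 (ca t) x * H2 (cb t) x)"
definition "G3 x t = fst t * (H3 (ca t) x * H0 (cb t) x + 3 * H2 (ca t) x * H1 (cb t) x + 3 * H1 (ca t) x * H2 (cb t) x + H0 (ca t) x * H3 (cb t) x)"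

lemma Dca: "0 < x \<Longrightarrow> x < 1 \<Longrightarrow> 0 < Dc (ca t) x"
  unfolding ca_def by (rule Dc_pos) auto
lemma Dcb: "0 < x \<Longrightarrow> x < 1 \<Longrightarrow> 0 < Dc (cb t) x"
  unfolding cb_def by (rule Dc_pos) auto

lemma dH [derivative_intros]:
  "0 < Dc c x \<Longrightarrow> D = H1 c x \<Longrightarrow> ((\<lambda>x. H0 c x) has_real_derivative D) (at x within S)"
  "0 < Dc c x \<Longrightarrow> D = H2 c x \<Longrightarrow> ((\<lambda>x. H1 c x) has_real_derivative D) (at x within S)"
  "0 < Dc c x \<Longrightarrow> D = H3 c x \<Longrightarrow> ((\<lambda>x. H2 c x) has_real_derivative D) (at x within S)"
  using dH0 dH1 dH2 by auto

lemma dG: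
  assumes "0 < x" "x < 1"
  shows "((\<lambda>x. G0 x t) has_real_derivative G1 x t) (at x within S)"
        "((\<lambda>x. G1 x t) has_real_derivative G2 x t) (at x within S)"
        "((\<lambda>x. G2 x t) has_real_derivative G3 x t) (at x within S)"
  unfolding G0_def G1_def G2_def G3_def using Dca[OF assms, of t] Dcb[OF assms, of t]
  by (auto intro!: derivative_eq_intros simp: algebra_simps)

lemma cont_G:
  shows "continuous_on (U \<times> Bx) (\<lambda>(x, t). G0 x t)" "continuous_on (U \<times> Bx) (\<lambda>(x, t). G1 x t)"
        "continuous_on (U \<times> Bx) (\<lambda>(x, t). G2 x t)" "continuous_on (U \<times> Bx) (\<lambda>(x, t). G3 x t)"
proof -
  have p: "\<And>z. z \<in> U \<times> Bx \<Longrightarrow> 0 < Dc (ca (snd z)) (fst z)" "\<And>z. z \<in> U \<times> Bx \<Longrightarrow> 0 < Dc (cb (snd z)) (fst z)"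
    using Dca Dcb unfolding U_def by auto
  have c: "continuous_on (U \<times> Bx) (\<lambda>z. ca (snd z))" "continuous_on (U \<times> Bx) (\<lambda>z. cb (snd z))"
    unfolding ca_def cb_def by (intro continuous_intros)+
  show "continuous_on (U \<times> Bx) (\<lambda>(x, t). G0 x t)" "continuous_on (U \<times> Bx) (\<lambda>(x, t). G1 x t)"
        "continuous_on (U \<times> Bx) (\<lambda>(x, t). G2 x t)" "continuous_on (U \<times> Bx) (\<lambda>(x, t). G3 x t)"
    unfolding G0_def G1_def G2_def G3_def split_beta
    by (intro continuous_intros c p; assumption)+
qed

lemma cont_Gx:
  assumes "x \<in> U"
  shows "continuous_on Bx (G0 x)" "continuous_on Bx (G1 x)" "continuous_on Bx (G2 x)" "continuous_on Bx (G3 x)"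
proof -
  have "continuous_on Bx (\<lambda>t. (\<lambda>(x, t). G0 x t) (x, t))"
    by (rule continuous_on_compose2[OF cont_G(1)]) (use assms in \<open>auto intro!: continuous_intros\<close>)
  then show "continuous_on Bx (G0 x)" by simp
  have "continuous_on Bx (\<lambda>t. (\<lambda>(x, t). G1 x t) (x, t))"
    by (rule continuous_on_compose2[OF cont_G(2)]) (use assms in \<open>auto intro!: continuous_intros\<close>)
  then show "continuous_on Bx (G1 x)" by simp
  have "continuous_on Bx (\<lambda>t. (\<lambda>(x, t). G2 x t) (x, t))"
    by (rule continuous_on_compose2[OF cont_G(3)]) (use assms in \<open>auto intro!: continuous_intros\<close>)
  then show "continuous_on Bx (G2 x)" by simp
  have "continuous_on Bx (\<lambda>t. (\<lambda>(x, t). G3 x t) (x, t))"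
    by (rule continuous_on_compose2[OF cont_G(4)]) (use assms in \<open>auto intro!: continuous_intros\<close>)
  then show "continuous_on Bx (G3 x)" by simp
qed

definition "gg0 x = integral Bx (G0 x)"
definition "gg1 x = integral Bx (G1 x)"
definition "gg2 x = integral Bx (G2 x)"
definition "gg3 x = integral Bx (G3 x)"

lemma open_U: "open U" unfolding U_def by simp
lemma convex_U: "convex U" unfolding U_def by simp

lemma dgg:
  assumes "x \<in> U"
  shows "(gg0 has_real_derivative gg1 x) (at x)" "(gg1 has_real_derivative gg2 x) (at x)" "(gg2 has_real_derivative gg3 x) (at x)"
proof -
  have xx: "0 < x" "x < 1" using assms unfolding U_def by auto
  have aw: "at x within U = at x" using at_within_open[OF assms open_U] .
  have "((\<lambda>x. integral Bx (G0 x)) has_real_derivative integral Bx (G1 x)) (at x within U)"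
    unfolding Bx_def
    by (rule leibniz_rule_field_derivative[OF _ _ cont_G(2)[unfolded Bx_def] assms convex_U])
       (auto simp: U_def intro!: dG integrable_continuous cont_Gx[unfolded Bx_def])
  then show "(gg0 has_real_derivative gg1 x) (at x)" unfolding gg0_def gg1_def aw by (simp add: fun_eq_iff)
  have "((\<lambda>x. integral Bx (G1 x)) has_real_derivative integral Bx (G2 x)) (at x within U)"
    unfolding Bx_def
    by (rule leibniz_rule_field_derivative[OF _ _ cont_G(3)[unfolded Bx_def] assms convex_U])
       (auto simp: U_def intro!: dG integrable_continuous cont_Gx[unfolded Bx_def])
  then show "(gg1 has_real_derivative gg2 x) (at x)" unfolding gg1_def gg2_def aw by (simp add: fun_eq_iff)
  have "((\<lambda>x. integral Bx (G2 x)) has_real_derivative integral Bx (G3 x)) (at x within U)"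
    unfolding Bx_def
    by (rule leibniz_rule_field_derivative[OF _ _ cont_G(4)[unfolded Bx_def] assms convex_U])
       (auto simp: U_def intro!: dG integrable_continuous cont_Gx[unfolded Bx_def])
  then show "(gg2 has_real_derivative gg3 x) (at x)" unfolding gg2_def gg3_def aw by (simp add: fun_eq_iff)
qed


lemma theta_calc:
  fixes \<phi> \<phi>1 \<phi>2 \<phi>3 :: "real \<Rightarrow> real"
  assumes V: "open V" "f \<in> V"
    and d1: "\<And>x. x \<in> V \<Longrightarrow> (\<phi> has_real_derivative \<phi>1 x) (at x)"
    and d2: "\<And>x. x \<in> V \<Longrightarrow> (\<phi>1 has_real_derivative \<phi>2 x) (at x)"
    and d3: "\<And>x. x \<in> V \<Longrightarrow> (\<phi>2 has_real_derivative \<phi>3 x) (at x)"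
  shows "theta \<phi> f = f * \<phi>1 f"
    "theta (theta (theta \<phi>)) f = f * \<phi>1 f + 3 * f^2 * \<phi>2 f + f^3 * \<phi>3 f"
proof -
  have t1: "theta \<phi> x = x * \<phi>1 x" if "x \<in> V" for x
    unfolding theta_def using DERIV_imp_deriv[OF d1[OF that]] by simp
  then show "theta \<phi> f = f * \<phi>1 f" using V by simp
  have dt1: "(theta \<phi> has_real_derivative (\<phi>1 x + x * \<phi>2 x)) (at x)" if "x \<in> V" for x
  proof -
    have "((\<lambda>x. x * \<phi>1 x) has_real_derivative (\<phi>1 x + x * \<phi>2 x)) (at x)"
      using d2[OF that] by (auto intro!: derivative_eq_intros)
    then show ?thesis
      by (rule has_field_derivative_transform_within_open[OF _ V(1) that]) (simp add: t1)
  qed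
  have t2: "theta (theta \<phi>) x = x * (\<phi>1 x + x * \<phi>2 x)" if "x \<in> V" for x
    unfolding theta_def[of "theta \<phi>"] using DERIV_imp_deriv[OF dt1[OF that]] by simp
  have dt2: "(theta (theta \<phi>) has_real_derivative (\<phi>1 x + 3 * x * \<phi>2 x + x^2 * \<phi>3 x)) (at x)" if "x \<in> V" for x
  proof -
    have "((\<lambda>x. x * (\<phi>1 x + x * \<phi>2 x)) has_real_derivative (\<phi>1 x + 3 * x * \<phi>2 x + x^2 * \<phi>3 x)) (at x)"
      using d2[OF that] d3[OF that] by (auto intro!: derivative_eq_intros simp: algebra_simps power2_eq_square)
    then show ?thesis
      by (rule has_field_derivative_transform_within_open[OF _ V(1) that]) (simp add: t2)
  qed
  show "theta (theta (theta \<phi>)) f = f * \<phi>1 f + 3 * f^2 * \<phi>2 f + f^3 * \<phi>3 f"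
    unfolding theta_def[of "theta (theta \<phi>)"] using DERIV_imp_deriv[OF dt2[OF V(2)]]
    by (simp add: algebra_simps power2_eq_square power3_eq_cube)
qed

lemma R_formula:
  assumes eq: "\<And>x. x \<in> U \<Longrightarrow> gI x = gg0 x" and f: "f \<in> U"
  shows "R f = cc0 f * gg0 f + cc1 f * gg1 f + cc2 f * gg2 f + cc3 f * gg3 f"
proof -
  have dg0: "(gI has_real_derivative gg1 x) (at x)" if "x \<in> U" for x
    by (rule has_field_derivative_transform_within_open[OF dgg(1)[OF that] open_U that]) (simp add: eq)
  note dg1 = dgg(2) and dg2 = dgg(3)
  have A: "theta (theta (theta gI)) f = f * gg1 f + 3 * f^2 * gg2 f + f^3 * gg3 f"
    by (rule theta_calc(2)[OF open_U f dg0 dg1 dg2])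
  have B: "theta (theta (theta (\<lambda>x. x * gI x))) f = f * (gI f + f * gg1 f) + 3 * f^2 * (2 * gg1 f + f * gg2 f) + f^3 * (3 * gg2 f + f * gg3 f)"
   and B1: "theta (\<lambda>x. x * gI x) f = f * (gI f + f * gg1 f)"
  proof -
    have d1: "((\<lambda>x. x * gI x) has_real_derivative (gI x + x * gg1 x)) (at x)" if "x \<in> U" for x
      using dg0[OF that] by (auto intro!: derivative_eq_intros)
    have d2: "((\<lambda>x. gI x + x * gg1 x) has_real_derivative (2 * gg1 x + x * gg2 x)) (at x)" if "x \<in> U" for x
      using dg0[OF that] dg1[OF that] by (auto intro!: derivative_eq_intros)
    have d3: "((\<lambda>x. 2 * gg1 x + x * gg2 x) has_real_derivative (3 * gg2 x + x * gg3 x)) (at x)" if "x \<in> U" for x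
      using dg1[OF that] dg2[OF that] by (auto intro!: derivative_eq_intros)
    show "theta (theta (theta (\<lambda>x. x * gI x))) f = f * (gI f + f * gg1 f) + 3 * f^2 * (2 * gg1 f + f * gg2 f) + f^3 * (3 * gg2 f + f * gg3 f)"
      by (rule theta_calc(2)[OF open_U f d1 d2 d3])
    show "theta (\<lambda>x. x * gI x) f = f * (gI f + f * gg1 f)"
      by (rule theta_calc(1)[OF open_U f d1 d2 d3])
  qed
  have C: "theta (theta (theta (\<lambda>x. x^2 * gI x))) f = f * (2 * f * gI f + f^2 * gg1 f) + 3 * f^2 * (2 * gI f + 4 * f * gg1 f + f^2 * gg2 f) + f^3 * (6 * gg1 f + 6 * f * gg2 f + f^2 * gg3 f)"
  proof -
    have d1: "((\<lambda>x. x^2 * gI x) has_real_derivative (2 * x * gI x + x^2 * gg1 x)) (at x)" if "x \<in> U" for x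
      using dg0[OF that] by (auto intro!: derivative_eq_intros)
    have d2: "((\<lambda>x. 2 * x * gI x + x^2 * gg1 x) has_real_derivative (2 * gI x + 4 * x * gg1 x + x^2 * gg2 x)) (at x)" if "x \<in> U" for x
      using dg0[OF that] dg1[OF that] by (auto intro!: derivative_eq_intros simp: algebra_simps)
    have d3: "((\<lambda>x. 2 * gI x + 4 * x * gg1 x + x^2 * gg2 x) has_real_derivative (6 * gg1 x + 6 * x * gg2 x + x^2 * gg3 x)) (at x)" if "x \<in> U" for x
      using dg0[OF that] dg1[OF that] dg2[OF that] by (auto intro!: derivative_eq_intros simp: algebra_simps)
    show ?thesis by (rule theta_calc(2)[OF open_U f d1 d2 d3])
  qed
  have f0: "f \<noteq> 0" using f unfolding U_def by auto
  show ?thesis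
    unfolding R_def A B B1 C eq[OF f] cc0_def cc1_def cc2_def cc3_def using f0
    apply (simp add: field_simps power2_eq_square power3_eq_cube) by algebra
qed


lemma fubini_tri:
  fixes hh kk :: "real \<Rightarrow> real"
  assumes ch: "continuous_on UNIV hh" and ck: "continuous_on UNIV kk"
  defines "Sset \<equiv> {(a, b). 0 < b \<and> b < a \<and> a < pi / 2}"
  shows "integral Sset (\<lambda>(a, b). hh a * kk b) = integral {0..pi/2} (\<lambda>a. hh a * integral {0..a} kk)"
proof -
  let ?F = "\<lambda>z::real\<times>real. hh (fst z) * kk (snd z)"
  have Fe: "(\<lambda>(a, b). hh a * kk b) = ?F" by (simp add: fun_eq_iff)
  have Sset_eq: "Sset = {z. 0 < snd z \<and> snd z < fst z \<and> fst z < pi/2}" unfolding Sset_def by auto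
  have oS: "open Sset" unfolding Sset_eq
    by (intro open_Collect_conj open_Collect_less continuous_intros)
  have SM: "Sset \<in> sets lborel" using oS by simp
  have sub: "Sset \<subseteq> cbox (0,0) (pi/2, pi/2)" unfolding Sset_def by (auto simp: cbox_Pair_iff)
  have cF: "continuous_on UNIV ?F"
    by (intro continuous_intros continuous_on_compose2[OF ch] continuous_on_compose2[OF ck]) auto
  have si: "set_integrable lborel Sset ?F"
  proof (rule set_integrable_subset[OF _ SM sub])
    show "set_integrable lborel (cbox (0,0) (pi/2, pi/2)) ?F"
      unfolding set_integrable_def
      by (rule borel_integrable_compact) (auto intro: continuous_on_subset[OF cF])
  qed
  have "integral Sset ?F = (LINT z:Sset|lborel. ?F z)"
    using set_borel_integral_eq_integral(2)[OF si] by simp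
  also have "\<dots> = (\<integral>z. indicator Sset z *\<^sub>R ?F z \<partial>(lborel \<Otimes>\<^sub>M lborel))"
    unfolding set_lebesgue_integral_def lborel_prod ..
  also have "\<dots> = (\<integral>a. (\<integral>b. indicator Sset (a,b) *\<^sub>R ?F (a,b) \<partial>lborel) \<partial>lborel)"
    using si unfolding set_integrable_def lborel_prod[symmetric]
    by (rule lborel_pair.integral_fst'[symmetric])
  also have "\<dots> = (\<integral>a. indicator {0<..<pi/2} a *\<^sub>R (hh a * integral {0..a} kk) \<partial>lborel)"
  proof (rule Bochner_Integration.integral_cong[OF refl])
    fix a :: real
    show "(\<integral>b. indicator Sset (a,b) *\<^sub>R ?F (a,b) \<partial>lborel) = indicator {0<..<pi/2} a *\<^sub>R (hh a * integral {0..a} kk)"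
    proof (cases "0 < a \<and> a < pi/2")
      case True
      have "(\<lambda>b. indicator Sset (a,b) *\<^sub>R ?F (a,b)) = (\<lambda>b. hh a * (indicator {0<..<a} b *\<^sub>R kk b))"
        using True unfolding Sset_def by (auto simp: fun_eq_iff indicator_def)
      then have "(\<integral>b. indicator Sset (a,b) *\<^sub>R ?F (a,b) \<partial>lborel) = hh a * (LINT b:{0<..<a}|lborel. kk b)"
        unfolding set_lebesgue_integral_def by simp
      also have "(LINT b:{0<..<a}|lborel. kk b) = integral {0<..<a} kk"
      proof (rule set_borel_integral_eq_integral(2))
        show "set_integrable lborel {0<..<a} kk"
          by (rule set_integrable_subset[OF borel_integrable_atLeastAtMost'[of 0 a kk]])
             (auto intro: continuous_on_subset[OF ck])
      qed
      also have "\<dots> = integral {0..a} kk" by (simp add: integral_open_interval_real)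
      finally show ?thesis using True by simp
    next
      case False
      then have "(\<lambda>b. indicator Sset (a,b) *\<^sub>R ?F (a,b)) = (\<lambda>b. 0)"
        unfolding Sset_def by (auto simp: fun_eq_iff indicator_def)
      then show ?thesis using False by simp
    qed
  qed
  also have "\<dots> = (LINT a:{0<..<pi/2}|lborel. hh a * integral {0..a} kk)"
    unfolding set_lebesgue_integral_def ..
  also have "\<dots> = integral {0<..<pi/2} (\<lambda>a. hh a * integral {0..a} kk)"
  proof (rule set_borel_integral_eq_integral(2))
    have c: "continuous_on {0..pi/2} (\<lambda>a. hh a * integral {0..a} kk)"
      by (intro continuous_intros continuous_on_subset[OF ch] indefinite_integral_continuous_1
          integrable_continuous_real continuous_on_subset[OF ck]) auto
    show "set_integrable lborel {0<..<pi/2} (\<lambda>a. hh a * integral {0..a} kk)"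
      by (rule set_integrable_subset[OF borel_integrable_atLeastAtMost'[OF c]]) auto
  qed
  also have "\<dots> = integral {0..pi/2} (\<lambda>a. hh a * integral {0..a} kk)"
    by (simp add: integral_open_interval_real)
  finally show ?thesis unfolding Fe .
qed


lemma cont_Er [continuous_intros]:
  assumes "continuous_on S c" "continuous_on S x" "\<And>z. z \<in> S \<Longrightarrow> 0 < Dc (c z) (x z)" "\<And>z. z \<in> S \<Longrightarrow> x z \<noteq> 0"
  shows "continuous_on S (\<lambda>z. Er (c z) (x z))" "continuous_on S (\<lambda>z. Erx (c z) (x z))"
  unfolding Er_def Erx_def by (intro continuous_intros assms; simp add: assms)+

context
  fixes x :: real
  assumes x0: "0 < x" and x1: "x < 1"
begin

lemma Dpos: "c \<le> 1 \<Longrightarrow> 0 < Dc c x" using Dc_pos x0 x1 by blast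
lemma Dpos_cos: "0 < Dc (cos y) x" "0 < Dc (- cos y) x" using Dpos by auto

definition "Nf a b = CC0 x * (Er (cos (2*a)) x * H0 (- cos (2*b)) x + H0 (cos (2*a)) x * Er (- cos (2*b)) x)
   + CC1 x * (Er (cos (2*a)) x * H1 (- cos (2*b)) x + H1 (cos (2*a)) x * Er (- cos (2*b)) x)
   + CC2 x * (Erx (cos (2*a)) x * H0 (- cos (2*b)) x + H0 (cos (2*a)) x * Erx (- cos (2*b)) x)"

definition "w1 b = CC0 x * H0 (- cos (2*b)) x + CC1 x * H1 (- cos (2*b)) x"
definition "w2 b = CC2 x * H0 (- cos (2*b)) x"
definition "W1 a = integral {0..a} w1"
definition "W2 a = integral {0..a} w2"
definition "Jf a = Er (cos (2*a)) x * W1 a + Erx (cos (2*a)) x * W2 a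
   + (CC0 x * H0 (cos (2*a)) x + CC1 x * H1 (cos (2*a)) x) * Psi (-1) x a + CC2 x * H0 (cos (2*a)) x * Psix (-1) x a"
definition "Phi a = Psi 1 x a * W1 a + Psix 1 x a * W2 a + SC x (cos (2*a))"

lemma M_eq: "cc0 x * G0 x t + cc1 x * G1 x t + cc2 x * G2 x t + cc3 x * G3 x t = fst t * Nf (fst t) (fst t * snd t)"
proof -
  let ?a = "cos (2 * fst t)" and ?b = "- cos (2 * (fst t * snd t))"
  have e: "cc0 x * (H0 ?a x * H0 ?b x) + cc1 x * (H1 ?a x * H0 ?b x + H0 ?a x * H1 ?b x)
      + cc2 x * (H2 ?a x * H0 ?b x + 2 * H1 ?a x * H1 ?b x + H0 ?a x * H2 ?b x)
      + cc3 x * (H3 ?a x * H0 ?b x + 3 * H2 ?a x * H1 ?b x + 3 * H1 ?a x * H2 ?b x + H0 ?a x * H3 ?b x)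
     = CC0 x * (Er ?a x * H0 ?b x + H0 ?a x * Er ?b x) + CC1 x * (Er ?a x * H1 ?b x + H1 ?a x * Er ?b x)
      + CC2 x * (Erx ?a x * H0 ?b x + H0 ?a x * Erx ?b x)"
    by (rule symsq[OF x0 x1 ode1[OF x0 x1] ode2[OF x0 x1] ode1[OF x0 x1] ode2[OF x0 x1]]) auto
  have "cc0 x * G0 x t + cc1 x * G1 x t + cc2 x * G2 x t + cc3 x * G3 x t
     = fst t * (cc0 x * (H0 ?a x * H0 ?b x) + cc1 x * (H1 ?a x * H0 ?b x + H0 ?a x * H1 ?b x)
      + cc2 x * (H2 ?a x * H0 ?b x + 2 * H1 ?a x * H1 ?b x + H0 ?a x * H2 ?b x)
      + cc3 x * (H3 ?a x * H0 ?b x + 3 * H2 ?a x * H1 ?b x + 3 * H1 ?a x * H2 ?b x + H0 ?a x * H3 ?b x))"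
    unfolding G0_def G1_def G2_def G3_def ca_def cb_def by (simp add: algebra_simps)
  also have "\<dots> = fst t * (CC0 x * (Er ?a x * H0 ?b x + H0 ?a x * Er ?b x) + CC1 x * (Er ?a x * H1 ?b x + H1 ?a x * Er ?b x)
      + CC2 x * (Erx ?a x * H0 ?b x + H0 ?a x * Erx ?b x))"
    by (simp only: e)
  also have "\<dots> = fst t * Nf (fst t) (fst t * snd t)"
    unfolding Nf_def by simp
  finally show ?thesis .
qed

lemma cont_w: "continuous_on S w1" "continuous_on S w2"
  unfolding w1_def w2_def by (intro continuous_intros Dpos_cos)+

lemma cont_N: "continuous_on S (Nf a)"
  unfolding Nf_def using x0 by (intro continuous_intros Dpos_cos; simp)+

lemma inner_subst:
  assumes "0 \<le> a"
  shows "integral {0..1} (\<lambda>s. a * Nf a (a * s)) = integral {0..a} (Nf a)"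
proof -
  have "((\<lambda>s. a *\<^sub>R Nf a (a * s)) has_integral integral {a*0..a*1} (Nf a)) {0..1}"
    by (rule has_integral_substitution[where c=0 and d=a])
       (use assms in \<open>auto intro!: derivative_eq_intros cont_N mult_left_le\<close>)
  then have "((\<lambda>s. a * Nf a (a * s)) has_integral integral {0..a} (Nf a)) {0..1}" by simp
  then show ?thesis by (rule integral_unique)
qed

lemma Psi_0: "Psi e x 0 = 0" "Psix e x 0 = 0" "Psi e x (pi/2) = 0" "Psix e x (pi/2) = 0"
  unfolding Psi_def Psix_def by auto

lemma J_eq:
  assumes "0 \<le> a"
  shows "integral {0..a} (Nf a) = Jf a"
proof -
  have i1: "(w1 has_integral W1 a) {0..a}" unfolding W1_def
    by (rule integrable_integral, rule integrable_continuous_real, rule cont_w)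
  have i2: "(w2 has_integral W2 a) {0..a}" unfolding W2_def
    by (rule integrable_integral, rule integrable_continuous_real, rule cont_w)
  have i3: "((\<lambda>b. Er (- cos (2*b)) x) has_integral (Psi (-1) x a - Psi (-1) x 0)) {0..a}"
  proof (rule fundamental_theorem_of_calculus[OF assms])
    fix b assume "b \<in> {0..a}"
    show "(Psi (-1) x has_vector_derivative Er (- cos (2 * b)) x) (at b within {0..a})"
      using dPsi[of "-1" x b "{0..a}"] x0 x1 by (simp add: has_real_derivative_iff_has_vector_derivative)
  qed
  have i4: "((\<lambda>b. Erx (- cos (2*b)) x) has_integral (Psix (-1) x a - Psix (-1) x 0)) {0..a}"
  proof (rule fundamental_theorem_of_calculus[OF assms])
    fix b assume "b \<in> {0..a}"
    show "(Psix (-1) x has_vector_derivative Erx (- cos (2 * b)) x) (at b within {0..a})"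
      using dPsix[of "-1" x b "{0..a}"] x0 x1 by (simp add: has_real_derivative_iff_has_vector_derivative)
  qed
  have "((\<lambda>b. Er (cos (2*a)) x * w1 b + Erx (cos (2*a)) x * w2 b
      + (CC0 x * H0 (cos (2*a)) x + CC1 x * H1 (cos (2*a)) x) * Er (- cos (2*b)) x
      + CC2 x * H0 (cos (2*a)) x * Erx (- cos (2*b)) x) has_integral Jf a) {0..a}"
    unfolding Jf_def using has_integral_add[OF has_integral_add[OF has_integral_add[OF
        has_integral_mult_right[OF i1] has_integral_mult_right[OF i2]] has_integral_mult_right[OF i3]] has_integral_mult_right[OF i4]]
    by (simp add: Psi_0)
  moreover have "(\<lambda>b. Er (cos (2*a)) x * w1 b + Erx (cos (2*a)) x * w2 b
      + (CC0 x * H0 (cos (2*a)) x + CC1 x * H1 (cos (2*a)) x) * Er (- cos (2*b)) x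
      + CC2 x * H0 (cos (2*a)) x * Erx (- cos (2*b)) x) = Nf a"
    unfolding Nf_def w1_def w2_def by (simp add: fun_eq_iff algebra_simps)
  ultimately show ?thesis by (simp add: integral_unique)
qed

lemma dPhi:
  assumes "a \<in> {0..pi/2}"
  shows "(Phi has_vector_derivative Jf a) (at a within {0..pi/2})"
proof -
  have dW1: "(W1 has_real_derivative w1 a) (at a within {0..pi/2})"
    unfolding W1_def by (rule integral_has_real_derivative[OF cont_w(1) assms])
  have dW2: "(W2 has_real_derivative w2 a) (at a within {0..pi/2})"
    unfolding W2_def by (rule integral_has_real_derivative[OF cont_w(2) assms])
  have "(Phi has_real_derivative
      (Er (cos (2*a)) x * W1 a + w1 a * Psi 1 x a + (Erx (cos (2*a)) x * W2 a + w2 a * Psix 1 x a) + sin (2*a) * EdC x (cos (2*a))))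
      (at a within {0..pi/2})"
    unfolding Phi_def
    using dPsi[of 1 x a "{0..pi/2}"] dPsix[of 1 x a "{0..pi/2}"] dSfun[OF x0 x1, of a "{0..pi/2}"] x0 x1
    by (auto intro!: derivative_eq_intros dW1 dW2)
  moreover have "Er (cos (2*a)) x * W1 a + w1 a * Psi 1 x a + (Erx (cos (2*a)) x * W2 a + w2 a * Psix 1 x a) + sin (2*a) * EdC x (cos (2*a)) = Jf a"
    unfolding Jf_def EdC_def w1_def w2_def Psi_def Psix_def
    using x0 by (simp add: field_simps)
  ultimately show ?thesis by (simp add: has_real_derivative_iff_has_vector_derivative)
qed

lemma ip_pm1: "ip n 1 x = 1 / (1-x)^n" "ip n (-1) x = 1 / (1+x)^n"
proof -
  have "Dc 1 x = (1-x)^2" "Dc (-1) x = (1+x)^2" unfolding Dc_def by (simp_all add: power2_eq_square algebra_simps)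
  then show "ip n 1 x = 1 / (1-x)^n" "ip n (-1) x = 1 / (1+x)^n" unfolding ip_def using x0 x1 by simp_all
qed

lemma SC_vals: "SC x (-1) - SC x 1 = 2*(2*x/(1+x^2))^2 - 1"
proof -
  have p: "1 + x^2 \<noteq> 0" using zero_le_power2[of x] by linarith
  have a: "1 - x \<noteq> 0" "1 + x \<noteq> 0" "1 + x^2 \<noteq> 0" using x0 x1 p by auto
  have "SC x (-1) - SC x 1 = 2*(2*x/(1+x^2))^2 - 1"
  proof -
    have m: "1 - x^2 = (1-x)*(1+x)" by (simp add: power2_eq_square algebra_simps)
    have m3: "(1 - x*x)^3 = (1-x)^3 * (1+x)^3"
      by (simp add: power_mult_distrib[symmetric] algebra_simps)
    have t1: "(1-x^2)^3/2 * (ip 3 1 x * ip 3 (-1) x) = 1/2"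
      unfolding ip_pm1 m using a apply (simp add: field_simps power_mult_distrib) by (simp add: m3)
    have pp: "ip 1 1 x * ip 1 (-1) x = 1/(1-x^2)" unfolding ip_pm1 m by simp
    have mn: "1 - x^2 \<noteq> 0" using m_ne x0 x1 by blast
    have aux: "\<And>A M B::real. M \<noteq> 0 \<Longrightarrow> A*M/B*(1/M) = A/B" by (simp add: field_simps)
    have t2: "4*x^2*(1-x^2)/(1+x^2)^2 * (ip 1 1 x * ip 1 (-1) x) = 4*x^2/(1+x^2)^2"
      unfolding pp by (rule aux[OF mn])
    have s1: "SC x 1 = 1/2 - 4*x^2/(1+x^2)^2"
      unfolding SC_def by (simp only: mult_1_right mult.assoc t1[unfolded mult.assoc] t2[unfolded mult.assoc])
    have sm: "SC x (-1) = - SC x 1"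
      unfolding SC_def by (simp add: algebra_simps diff_divide_distrib)
    have "SC x (-1) - SC x 1 = 2 * (4*x^2/(1+x^2)^2) - 1"
      unfolding sm s1 by simp
    also have "\<dots> = 2*(2*x/(1+x^2))^2 - 1" by (simp add: power_divide power_mult_distrib)
    finally show ?thesis .
  qed
  then show ?thesis .
qed

lemma partC: "cc0 x * gg0 x + cc1 x * gg1 x + cc2 x * gg2 x + cc3 x * gg3 x = 2*(2*x/(1+x^2))^2 - 1"
proof -
  have xU: "x \<in> U" using x0 x1 unfolding U_def by simp
  note ci = cont_Gx[OF xU]
  have hi: "(G0 x has_integral gg0 x) Bx" "(G1 x has_integral gg1 x) Bx" "(G2 x has_integral gg2 x) Bx" "(G3 x has_integral gg3 x) Bx"
    unfolding gg0_def gg1_def gg2_def gg3_def Bx_def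
    by (rule integrable_integral, rule integrable_continuous, rule ci[unfolded Bx_def])+
  have "((\<lambda>t. cc0 x * G0 x t + cc1 x * G1 x t + cc2 x * G2 x t + cc3 x * G3 x t) has_integral
      (cc0 x * gg0 x + cc1 x * gg1 x + cc2 x * gg2 x + cc3 x * gg3 x)) Bx"
    by (intro has_integral_add has_integral_mult_right hi)
  then have "((\<lambda>t. fst t * Nf (fst t) (fst t * snd t)) has_integral
      (cc0 x * gg0 x + cc1 x * gg1 x + cc2 x * gg2 x + cc3 x * gg3 x)) Bx"
    by (simp add: M_eq)
  then have e1: "cc0 x * gg0 x + cc1 x * gg1 x + cc2 x * gg2 x + cc3 x * gg3 x = integral Bx (\<lambda>t. fst t * Nf (fst t) (fst t * snd t))"
    by (simp add: integral_unique)
  have cM: "continuous_on Bx (\<lambda>t. fst t * Nf (fst t) (fst t * snd t))"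
  proof -
    have "continuous_on Bx (\<lambda>t. cc0 x * G0 x t + cc1 x * G1 x t + cc2 x * G2 x t + cc3 x * G3 x t)"
      by (intro continuous_intros ci)
    then show ?thesis by (simp add: M_eq)
  qed
  have e2: "integral Bx (\<lambda>t. fst t * Nf (fst t) (fst t * snd t)) = integral {0..pi/2} (\<lambda>a. integral {0..1} (\<lambda>s. a * Nf a (a * s)))"
    using integral_prod_continuous[OF cM[unfolded Bx_def]] unfolding Bx_def by simp
  have e3: "integral {0..pi/2} (\<lambda>a. integral {0..1} (\<lambda>s. a * Nf a (a * s))) = integral {0..pi/2} Jf"
  proof (rule integral_cong)
    fix a assume "a \<in> {0..pi/2}"
    then have h: "0 \<le> a" by simp
    show "integral {0..1} (\<lambda>s. a * Nf a (a * s)) = Jf a" by (rule trans[OF inner_subst[OF h] J_eq[OF h]])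
  qed
  have e4: "(Jf has_integral (Phi (pi/2) - Phi 0)) {0..pi/2}"
    by (rule fundamental_theorem_of_calculus) (auto intro!: dPhi)
  have e5: "Phi (pi/2) - Phi 0 = SC x (-1) - SC x 1"
    unfolding Phi_def using Psi_0 by simp
  show ?thesis using e1 e2 e3 e4 e5 SC_vals by (simp add: integral_unique)
qed

end


lemma subst_gen:
  fixes F :: "real \<Rightarrow> real"
  assumes "continuous_on UNIV F" "0 \<le> a"
  shows "integral {0..1} (\<lambda>s. a * F (a * s)) = integral {0..a} F"
proof -
  have "((\<lambda>s. a *\<^sub>R F (a * s)) has_integral integral {a*0..a*1} F) {0..1}"
    by (rule has_integral_substitution[where c=0 and d=a])
       (use assms in \<open>auto intro!: derivative_eq_intros mult_left_le intro: continuous_on_subset\<close>)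
  then have "((\<lambda>s. a * F (a * s)) has_integral integral {0..a} F) {0..1}" by simp
  then show ?thesis by (rule integral_unique)
qed

lemma gI_eq:
  assumes xU: "x \<in> U"
  shows "gI x = gg0 x"
proof -
  have x0: "0 < x" and x1: "x < 1" using xU unfolding U_def by auto
  have Dp: "\<And>c. c \<le> 1 \<Longrightarrow> 0 < Dc c x" using Dc_pos x0 x1 by blast
  let ?hh = "\<lambda>a. H0 (cos (2*a)) x" and ?kk = "\<lambda>b. H0 (- cos (2*b)) x"
  have ch: "continuous_on UNIV ?hh" by (intro continuous_intros Dp) auto
  have ck: "continuous_on UNIV ?kk" by (intro continuous_intros Dp) auto
  have integrand: "(\<lambda>(a, b). 1 / sqrt (((1 + x)\<^sup>2 - 4 * x * (cos a)\<^sup>2) * ((1 + x)\<^sup>2 - 4 * x * (sin b)\<^sup>2)))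
      = (\<lambda>(a, b). ?hh a * ?kk b)"
  proof (intro ext, clarify)
    fix a b :: real
    have e1: "(1 + x)\<^sup>2 - 4 * x * (cos a)\<^sup>2 = Dc (cos (2*a)) x"
      unfolding Dc_def cos_double_cos by (simp add: power2_eq_square algebra_simps)
    have e2: "(1 + x)\<^sup>2 - 4 * x * (sin b)\<^sup>2 = Dc (- cos (2*b)) x"
      unfolding Dc_def cos_double_sin by (simp add: power2_eq_square algebra_simps)
    show "1 / sqrt (((1 + x)\<^sup>2 - 4 * x * (cos a)\<^sup>2) * ((1 + x)\<^sup>2 - 4 * x * (sin b)\<^sup>2)) = ?hh a * ?kk b"
      unfolding e1 e2 H0_def ip_def by (simp add: real_sqrt_mult)
  qed
  have "gI x = integral {(a, b). 0 < b \<and> b < a \<and> a < pi / 2} (\<lambda>(a, b). ?hh a * ?kk b)"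
    unfolding gI_def I2_def integrand using x0 by simp
  also have "\<dots> = integral {0..pi/2} (\<lambda>a. ?hh a * integral {0..a} ?kk)"
    by (rule fubini_tri[OF ch ck])
  also have "\<dots> = gg0 x"
  proof -
    have "gg0 x = integral {0..pi/2} (\<lambda>a. integral {0..1} (\<lambda>s. G0 x (a, s)))"
      unfolding gg0_def Bx_def using integral_prod_continuous[OF cont_Gx(1)[OF xU, unfolded Bx_def]] by simp
    also have "\<dots> = integral {0..pi/2} (\<lambda>a. ?hh a * integral {0..a} ?kk)"
    proof (rule integral_cong)
      fix a assume "a \<in> {0..pi/2}"
      then have a0: "0 \<le> a" by simp
      have "(\<lambda>s. G0 x (a, s)) = (\<lambda>s. ?hh a * (a * ?kk (a * s)))"
        unfolding G0_def ca_def cb_def by (simp add: fun_eq_iff algebra_simps)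
      then show "integral {0..1} (\<lambda>s. G0 x (a, s)) = ?hh a * integral {0..a} ?kk"
        using subst_gen[OF ck a0] by simp
    qed
    finally show ?thesis by simp
  qed
  finally show ?thesis .
qed

theorem theorem1:
  fixes f :: real
  assumes "0 < f" and "f < 1"
  shows "R f = 2 * (2 * f / (1 + f\<^sup>2))\<^sup>2 - 1"
proof -
  have fU: "f \<in> U" using assms unfolding U_def by simp
  have "R f = cc0 f * gg0 f + cc1 f * gg1 f + cc2 f * gg2 f + cc3 f * gg3 f"
    by (rule R_formula[OF gI_eq fU])
  also have "\<dots> = 2 * (2 * f / (1 + f\<^sup>2))\<^sup>2 - 1"
    by (rule partC[OF assms])
  finally show ?thesis .
qed


end
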